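(* Under the standing assumptions with Gaussian signaling $x\sim\mathcal{CN}(0,1)$ (so $\hat\phi(\rho)=1/(1+\rho)$), let $\rho^*=\rho^*_{\rm Gau}=[\hat\gamma(1)]^{-1}-1$ and $v^*=\hat\phi(\rho^* )$. Then $$\int_0^{\rho^*}\hat\phi(\rho)\,d\rho+\int_{\rho^*}^{snr}\eta^{-1}(\rho)\,d\rho=\lim_{N\to\infty}\tfrac1N\log\det\big(\mathbf I+snr\,\mathbf A^{\mathrm H}\mathbf A\big),$$ i.e. the area $A_{\rm ADGO}$ equals the Gaussian capacity $C_{\rm Gau\text{-}LUIS}(snr)=\frac1N\log\det(\mathbf I+snr\,\mathbf A^{\mathrm H}\mathbf A)$ of the LUIS. Consequently, under the coded OAMP state-evolution assumption, the OAMP achievable rate (for codes whose transfer functions converge to $\min\{\eta^{-1},\hat\phi\}$ on $[0,snr]$ from below) converges to $C_{\rm Gau\text{-}LUIS}(snr)$.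
   Context: Standing assumptions (LUIS): $M,N\to\infty$ with $\beta=N/M$ fixed; $\mathbf A\in\mathbb C^{M\times N}$ right-unitarily invariant, the empirical eigenvalue distribution of $\mathbf A^{\mathrm H}\mathbf A$ converges to a compactly supported limit, $\frac1N\mathrm{tr}(\mathbf A^{\mathrm H}\mathbf A)\to1$, $\mathbf A\ne\mathbf 0$; normalized traces/log-determinants denote large-system limits; $\mathbf y=\mathbf A\mathbf x+\mathbf n$, $\mathbf n\sim\mathcal{CN}(\mathbf 0,\sigma^2\mathbf I)$, $snr=\sigma^{-2}$. $\hat\phi(\rho)=\mathrm E|x-\mathrm E[x\mid\sqrt\rho x+z]|^2$, $z\sim\mathcal{CN}(0,1)$. $\hat\gamma(v)=\frac1N\mathrm{tr}\{(snr\,\mathbf A^{\mathrm H}\mathbf A+v^{-1}\mathbf I)^{-1}\}$ with inverse $\hat\gamma^{-1}$; $\eta(v)=v^{-1}-[\hat\gamma^{-1}(v)]^{-1}$, decreasing with $\eta(0^+)=snr$, inverse $\eta^{-1}$. Coded OAMP state-evolution assumption: a code with transfer function $\hat\phi^{\mathcal C}(\rho)=\frac1N\mathrm{mmse}(\mathbf x\mid\sqrt\rho\mathbf x+\mathbf z,\mathbf x\in\mathcal C)$ satisfying $\hat\phi^{\mathcal C}<\min\{\eta^{-1},\hat\phi\}$ on $[0,snr)$ is decoded error-free by OAMP, and its rate $\int_0^\infty\hat\phi^{\mathcal C}d\rho$ is the OAMP achievable rate. *)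

theory Defs
  imports "HOL-Probability.Probability"
begin

text \<open>The limiting empirical eigenvalue distribution of
  A^H A is a probability measure mu on the reals (compactly supported, on [0,B]).
  All normalized traces / log-determinants are large-system limits, i.e. integrals
  against mu.  Logarithms are natural (nats).\<close>

definition phi_gau :: "real \<Rightarrow> real" where
  "phi_gau \<rho> = 1 / (1 + \<rho>)"

text \<open>gamma_hat(v) = lim (1/N) tr (snr A^H A + v^{-1} I)^{-1}\<close>
definition gamma_hat :: "real measure \<Rightarrow> real \<Rightarrow> real \<Rightarrow> real" where
  "gamma_hat \<mu> snr v = (\<integral>t. 1 / (snr * t + 1 / v) \<partial>\<mu>)"

definition gamma_hat_inv :: "real measure \<Rightarrow> real \<Rightarrow> real \<Rightarrow> real" where
  "gamma_hat_inv \<mu> snr u = (THE v. 0 < v \<and> gamma_hat \<mu> snr v = u)"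

definition eta_dom :: "real measure \<Rightarrow> real \<Rightarrow> real set" where
  "eta_dom \<mu> snr = {u. 0 < u \<and> (\<exists>v>0. gamma_hat \<mu> snr v = u)}"

definition eta :: "real measure \<Rightarrow> real \<Rightarrow> real \<Rightarrow> real" where
  "eta \<mu> snr v = 1 / v - 1 / gamma_hat_inv \<mu> snr v"

definition eta_inv :: "real measure \<Rightarrow> real \<Rightarrow> real \<Rightarrow> real" where
  "eta_inv \<mu> snr \<rho> = (THE v. v \<in> eta_dom \<mu> snr \<and> eta \<mu> snr v = \<rho>)"

text \<open>The curve min{eta^{-1}, phi_hat} on [0,snr).  eta is decreasing, so for
  rho below the range of eta the value eta^{-1}(rho) is (conventionally) +infinity and the
  minimum is phi_hat(rho).\<close>
definition min_curve :: "real measure \<Rightarrow> real \<Rightarrow> real \<Rightarrow> real" where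
  "min_curve \<mu> snr \<rho> =
     (if \<exists>v\<in>eta_dom \<mu> snr. eta \<mu> snr v = \<rho>
      then min (eta_inv \<mu> snr \<rho>) (phi_gau \<rho>) else phi_gau \<rho>)"

definition C_gau_luis :: "real measure \<Rightarrow> real \<Rightarrow> real" where
  "C_gau_luis \<mu> snr = (\<integral>t. ln (1 + snr * t) \<partial>\<mu>)"

end

theory Submission
  imports Defs
begin


lemma deriv_param:
  fixes g :: "real \<Rightarrow> 'a \<Rightarrow> real" and d :: "'a \<Rightarrow> real"
  assumes P: "prob_space M" and dpos: "0 < \<delta>"
    and intg: "\<And>y. \<bar>y - v\<bar> < \<delta> \<Longrightarrow> integrable M (g y)"
    and intd: "integrable M d"
    and rem: "\<And>y. \<bar>y - v\<bar> < \<delta> \<Longrightarrow> AE t in M. \<bar>g y t - g v t - (y - v) * d t\<bar> \<le> K * (y - v)^2"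
  shows "((\<lambda>y. \<integral>t. g y t \<partial>M) has_field_derivative (\<integral>t. d t \<partial>M)) (at v)"
proof -
  interpret prob_space M by fact
  have key: "\<bar>((\<integral>t. g y t \<partial>M) - (\<integral>t. g v t \<partial>M)) / (y - v) - (\<integral>t. d t \<partial>M)\<bar> \<le> K * \<bar>y - v\<bar>"
    if y: "\<bar>y - v\<bar> < \<delta>" "y \<noteq> v" for y
  proof -
    have iy: "integrable M (g y)" and iv: "integrable M (g v)" using intg y dpos by auto
    have "((\<integral>t. g y t \<partial>M) - (\<integral>t. g v t \<partial>M)) / (y - v) - (\<integral>t. d t \<partial>M)
        = (\<integral>t. (g y t - g v t - (y - v) * d t) \<partial>M) / (y - v)"
      using iy iv intd y by (simp add: field_simps)
    also have "\<bar>\<dots>\<bar> = \<bar>\<integral>t. (g y t - g v t - (y - v) * d t) \<partial>M\<bar> / \<bar>y - v\<bar>"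
      by (simp add: abs_divide)
    also have "\<bar>\<integral>t. (g y t - g v t - (y - v) * d t) \<partial>M\<bar> \<le> (\<integral>t. K * (y - v)^2 \<partial>M)"
    proof -
      have "\<bar>\<integral>t. (g y t - g v t - (y - v) * d t) \<partial>M\<bar> \<le> (\<integral>t. \<bar>g y t - g v t - (y - v) * d t\<bar> \<partial>M)"
        by (rule integral_abs_bound)
      also have "\<dots> \<le> (\<integral>t. K * (y - v)^2 \<partial>M)"
        using rem[OF y(1)] iy iv intd by (intro integral_mono_AE) auto
      finally show ?thesis .
    qed
    hence "\<bar>\<integral>t. (g y t - g v t - (y - v) * d t) \<partial>M\<bar> \<le> K * (y - v)^2"
      using prob_space by simp
    hence "\<bar>\<integral>t. (g y t - g v t - (y - v) * d t) \<partial>M\<bar> / \<bar>y - v\<bar> \<le> K * (y - v)^2 / \<bar>y - v\<bar>"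
      by (rule divide_right_mono) simp
    also have "K * (y - v)^2 / \<bar>y - v\<bar> = K * \<bar>y - v\<bar>"
      proof -
      have e: "(y-v)^2 = \<bar>y-v\<bar>*\<bar>y-v\<bar>" by (simp add: power2_eq_square)
      show ?thesis using y by (subst e) (simp add: field_simps del: abs_mult_self_eq)
    qed
    finally show ?thesis .
  qed
  have ev: "eventually (\<lambda>y. norm (((\<integral>t. g y t \<partial>M) - (\<integral>t. g v t \<partial>M)) / (y - v) - (\<integral>t. d t \<partial>M)) \<le> K * \<bar>y - v\<bar>) (at v)"
    unfolding eventually_at using dpos key by (auto simp: dist_real_def intro!: exI[of _ \<delta>])
  have "((\<lambda>y. K * \<bar>y - v\<bar>) \<longlongrightarrow> 0) (at v)"
  proof -
    have "((\<lambda>y. K * \<bar>y - v\<bar>) \<longlongrightarrow> K * \<bar>v - v\<bar>) (at v)"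
      by (intro tendsto_intros)
    thus ?thesis by simp
  qed
  from Lim_null_comparison[OF ev this]
  have "((\<lambda>y. ((\<integral>t. g y t \<partial>M) - (\<integral>t. g v t \<partial>M)) / (y - v) - (\<integral>t. d t \<partial>M)) \<longlongrightarrow> 0) (at v)" .
  hence "((\<lambda>y. ((\<integral>t. g y t \<partial>M) - (\<integral>t. g v t \<partial>M)) / (y - v)) \<longlongrightarrow> (\<integral>t. d t \<partial>M)) (at v)"
    by (simp add: LIM_zero_iff)
  thus ?thesis by (simp add: has_field_derivative_iff)
qed

lemma div_half: "1/2 \<le> (d::real) \<Longrightarrow> 0 \<le> x \<Longrightarrow> x \<le> C \<Longrightarrow> x / d \<le> 2 * C"
proof -
  assume h: "1/2 \<le> d" "0 \<le> x" "x \<le> C"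
  have "x / d \<le> x / (1/2)" using h by (intro divide_left_mono) auto
  thus ?thesis using h by simp
qed

lemma rem_q_eq:
  fixes y v a :: real
  assumes "1 + y * a \<noteq> 0" "1 + v * a \<noteq> 0"
  shows "a/(1+y * a) - a/(1+v * a) - (y-v) * (- ((a/(1+v * a))^2)) = (y-v)^2 * a^3/((1+v * a)^2*(1+y * a))"
proof -
  define d1 where "d1 = 1 + y * a"
  define d2 where "d2 = 1 + v * a"
  have n: "d1 \<noteq> 0" "d2 \<noteq> 0" using assms by (auto simp: d1_def d2_def)
  have "a/d1 - a/d2 - (y-v) * (- ((a/d2)^2)) = (a*d2^2 - a*d1*d2 + (y-v)*a^2*d1)/(d2^2*d1)"
    using n by (simp add: field_simps power2_eq_square)
  also have "a*d2^2 - a*d1*d2 + (y-v)*a^2*d1 = (y-v)^2 * a^3"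
    by (simp add: d1_def d2_def power2_eq_square power3_eq_cube algebra_simps)
  finally show ?thesis by (simp add: d1_def d2_def)
qed

lemma rem_q_bound:
  fixes y v a A :: real
  assumes "1/2 \<le> 1 + y * a" "1/2 \<le> 1 + v * a" "0 \<le> a" "a \<le> A"
  shows "\<bar>(y-v)^2 * a^3/((1+v * a)^2*(1+y * a))\<bar> \<le> 8 * A^3 * (y-v)^2"
proof -
  have den: "1/8 \<le> (1+v * a)^2*(1+y * a)"
  proof -
    have "1/4 \<le> (1+v * a)^2" using assms(2) proof -
      have "1/2 * (1/2) \<le> (1 + v * a) * (1 + v * a)" using assms(2) by (intro mult_mono) auto
      thus ?thesis by (simp add: power2_eq_square)
    qed
    hence "1/4 * (1/2) \<le> (1+v * a)^2*(1+y * a)" using assms(1) by (intro mult_mono) auto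
    thus ?thesis by simp
  qed
  have a3: "a^3 \<le> A^3" using assms by (intro power_mono) auto
  have "a^3/((1+v * a)^2*(1+y * a)) \<le> a^3 / (1/8)"
    using den assms by (intro divide_left_mono) auto
  also have "\<dots> \<le> 8 * A^3" using a3 by simp
  finally have "a^3/((1+v * a)^2*(1+y * a)) \<le> 8 * A^3" .
  moreover have "0 \<le> a^3/((1+v * a)^2*(1+y * a))" using den assms by simp
  ultimately have h: "\<bar>a^3/((1+v * a)^2*(1+y * a))\<bar> \<le> 8 * A^3" by linarith
  have "\<bar>(y-v)^2 * a^3/((1+v * a)^2*(1+y * a))\<bar> = (y-v)^2 * \<bar>a^3/((1+v * a)^2*(1+y * a))\<bar>"
    by (simp add: abs_mult)
  also have "\<dots> \<le> (y-v)^2 * (8 * A^3)" using h by (intro mult_left_mono) auto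
  finally show ?thesis by (simp add: mult_ac)
qed

lemma rem_L_bound:
  fixes y v a A :: real
  assumes "1/2 \<le> 1 + y * a" "1/2 \<le> 1 + v * a" "0 \<le> a" "a \<le> A" "\<bar>y - v\<bar> * (2*A) \<le> 1/2"
  shows "\<bar>ln (1+y * a) - ln (1+v * a) - (y-v) * (a/(1+v * a))\<bar> \<le> 8 * A^2 * (y-v)^2"
proof -
  define x where "x = (y-v) * (a/(1+v * a))"
  have X: "0 \<le> a/(1+v * a)" "a/(1+v * a) \<le> 2*A" using assms div_half[of "1+v * a" a A] by auto
  have "1 + x = (1+y * a)/(1+v * a)"
  proof -
    define d2 where "d2 = 1 + v * a"
    have "d2 \<noteq> 0" using assms by (auto simp: d2_def)
    hence "1 + (y-v)*(a/d2) = (d2 + (y-v)*a)/d2" by (simp add: field_simps)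
    also have "d2 + (y-v)*a = 1 + y * a" by (simp add: d2_def algebra_simps)
    finally show ?thesis by (simp add: x_def d2_def)
  qed
  hence l: "ln (1+y * a) - ln (1+v * a) = ln (1 + x)" using assms by (simp add: ln_div)
  have X2: "\<bar>a/(1+v * a)\<bar> \<le> 2*A" using X by linarith
  have "\<bar>x\<bar> = \<bar>y - v\<bar> * \<bar>a/(1+v * a)\<bar>" unfolding x_def by (rule abs_mult)
  also have "\<dots> \<le> \<bar>y - v\<bar> * (2*A)" using X2 by (intro mult_left_mono) auto
  finally have ax: "\<bar>x\<bar> \<le> \<bar>y - v\<bar> * (2*A)" .
  hence "\<bar>x\<bar> \<le> 1/2" using assms by simp
  hence b1: "\<bar>ln (1+x) - x\<bar> \<le> 2 * x^2" by (rule abs_ln_one_plus_x_minus_x_bound)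
  have "x^2 \<le> (\<bar>y - v\<bar> * (2*A))^2" using ax by (metis abs_ge_zero power2_abs power_mono)
  hence "2 * x^2 \<le> 8 * A^2 * (y-v)^2" by (simp add: power_mult_distrib power2_abs mult_ac)
  with b1 have "\<bar>ln (1+x) - x\<bar> \<le> 8 * A^2 * (y-v)^2" by linarith
  thus ?thesis using l by (simp add: x_def)
qed





lemma ra: fixes p q v :: real assumes "p \<noteq> 0" "0 < v" "p = 1 - v * q" shows "q / p = 1 / (v * p) - 1 / v"
proof -
  have "1 / (v * p) - 1 / v = (1 - p) / (v * p)" using assms(1,2) by (simp add: field_simps)
  also have "1 - p = v * q" using assms(3) by simp
  also have "v * q / (v * p) = q / p" using assms(2) by simp
  finally show ?thesis ..
qed
lemma rs: fixes p q :: real assumes "p \<noteq> 0" "p = 1 - q" shows "1 / p - 1 = q / p"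
proof -
  have "1 / p - 1 = (1 - p) / p" using assms(1) by (simp add: field_simps)
  also have "1 - p = q" using assms(2) by simp
  finally show ?thesis .
qed

locale LUIS =
  fixes \<mu> :: "real measure" and snr B :: real
  assumes prob: "prob_space \<mu>"
    and sets_mu: "sets \<mu> = sets borel"
    and supp: "AE t in \<mu>. 0 \<le> t \<and> t \<le> B"
    and normalized: "(\<integral>t. t \<partial>\<mu>) = 1"
    and snr_pos: "0 < snr"
begin

interpretation P: prob_space \<mu> by (rule prob)

definition "A = snr * B"
definition "d0 = 1 / (2 * (A + 1))"
definition "p v = (\<integral>t. 1 / (1 + v * snr * t) \<partial>\<mu>)"
definition "q v = (\<integral>t. snr * t / (1 + v * snr * t) \<partial>\<mu>)"
definition "s v = (\<integral>t. (snr * t / (1 + v * snr * t))^2 \<partial>\<mu>)"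
definition "L v = (\<integral>t. ln (1 + v * snr * t) \<partial>\<mu>)"

lemma B_nonneg: "0 \<le> B"
proof -
  have "AE t in \<mu>. 0 \<le> B" using supp by eventually_elim auto
  thus ?thesis by (simp add: P.AE_const)
qed

lemma A_nonneg: "0 \<le> A" using B_nonneg snr_pos by (simp add: A_def)
lemma d0_pos: "0 < d0" using A_nonneg by (simp add: d0_def)

lemma meas: "f \<in> borel_measurable borel \<Longrightarrow> f \<in> borel_measurable \<mu>"
  using measurable_cong_sets[OF sets_mu refl] by blast

lemma intb: assumes "f \<in> borel_measurable borel" "AE t in \<mu>. \<bar>f t\<bar> \<le> (C::real)"
  shows "integrable \<mu> f"
proof (rule Bochner_Integration.integrable_bound)
  show "integrable \<mu> (\<lambda>x. C)" by simp
  show "f \<in> borel_measurable \<mu>" by (rule meas[OF assms(1)])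
  show "AE x in \<mu>. norm (f x) \<le> norm C" using assms(2) by eventually_elim auto
qed

lemma pt_bound:
  assumes "-d0 \<le> y" "0 \<le> t" "t \<le> B"
  shows "1/2 \<le> 1 + y * snr * t"
proof -
  have "snr * t \<le> A" using assms snr_pos by (simp add: A_def mult_left_mono)
  have "-d0 * (snr * t) \<le> y * (snr * t)" using assms snr_pos by (intro mult_right_mono) auto
  moreover have "d0 * (snr * t) \<le> d0 * A" using \<open>snr * t \<le> A\<close> d0_pos by (intro mult_left_mono) auto
  moreover have "d0 * A \<le> 1/2" using A_nonneg by (simp add: d0_def field_simps)
  ultimately show ?thesis by (simp add: algebra_simps)
qed

lemma AE_good: assumes "-d0 \<le> y" shows "AE t in \<mu>. 0 \<le> t \<and> t \<le> B \<and> 1/2 \<le> 1 + y * snr * t \<and> snr * t \<le> A"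
  using supp
proof eventually_elim
  fix t assume "0 \<le> t \<and> t \<le> B"
  thus "0 \<le> t \<and> t \<le> B \<and> 1/2 \<le> 1 + y * snr * t \<and> snr * t \<le> A"
    using pt_bound[of y t] assms snr_pos by (auto simp: A_def mult_left_mono)
qed

lemma int_w: "-d0 \<le> y \<Longrightarrow> integrable \<mu> (\<lambda>t. 1 / (1 + y * snr * t))"
  apply (rule intb[where C=2])
   apply measurable
  using AE_good apply (rule AE_mp)
  by (auto simp: field_simps)

lemma int_X: "-d0 \<le> y \<Longrightarrow> integrable \<mu> (\<lambda>t. snr * t / (1 + y * snr * t))"
  apply (rule intb[where C="2 * A"])
   apply measurable
  using AE_good apply (rule AE_mp)
  using snr_pos by (auto intro!: div_half)


lemma X_bounds: assumes "-d0 \<le> y"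
  shows "AE t in \<mu>. 0 \<le> snr * t/(1+y * snr * t) \<and> snr * t/(1+y * snr * t) \<le> 2 * A \<and> 0 < 1/(1+y * snr * t) \<and> 1/(1+y * snr * t) \<le> 2
     \<and> 1/2 \<le> 1 + y * snr * t \<and> 0 \<le> snr * t \<and> snr * t \<le> A \<and> 0 \<le> t \<and> t \<le> B"
  using AE_good[OF assms]
proof eventually_elim
  fix t assume h: "0 \<le> t \<and> t \<le> B \<and> 1/2 \<le> 1 + y * snr * t \<and> snr * t \<le> A"
  have "0 \<le> snr * t" using h snr_pos by simp
  moreover have "snr * t/(1+y * snr * t) \<le> 2 * A" using h \<open>0 \<le> snr * t\<close> by (intro div_half) auto
  moreover have "1/(1+y * snr * t) \<le> 2 * 1" using h by (intro div_half) auto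
  ultimately show "0 \<le> snr * t/(1+y * snr * t) \<and> snr * t/(1+y * snr * t) \<le> 2 * A \<and> 0 < 1/(1+y * snr * t) \<and> 1/(1+y * snr * t) \<le> 2
     \<and> 1/2 \<le> 1 + y * snr * t \<and> 0 \<le> snr * t \<and> snr * t \<le> A \<and> 0 \<le> t \<and> t \<le> B"
    using h by auto
qed

lemma int_X2: assumes "-d0 \<le> y" shows "integrable \<mu> (\<lambda>t. (snr * t / (1 + y * snr * t))^2)"
proof (rule intb[where C="(2 * A)^2"])
  show "(\<lambda>t. (snr * t / (1 + y * snr * t))^2) \<in> borel_measurable borel" by measurable
  show "AE t in \<mu>. \<bar>(snr * t / (1 + y * snr * t))^2\<bar> \<le> (2 * A)^2"
    using X_bounds[OF assms] by eventually_elim (simp only: abs_power2, rule power_mono, auto)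
qed

lemma ln_bound: assumes "1/2 \<le> (z::real)" shows "\<bar>ln z\<bar> \<le> 1 + \<bar>z\<bar>"
proof -
  have "ln z \<le> z - 1" using assms by (intro ln_le_minus_one) auto
  moreover have "ln (1/z) \<le> 1/z - 1" using assms by (intro ln_le_minus_one) auto
  moreover have "1/z \<le> 2 * 1" using assms by (intro div_half) auto
  moreover have "ln (1/z) = - ln z" using assms by (simp add: ln_div)
  ultimately show ?thesis by auto
qed

lemma int_L: assumes "-d0 \<le> y" shows "integrable \<mu> (\<lambda>t. ln (1 + y * snr * t))"
proof (rule intb[where C="2 + \<bar>y\<bar> * A"])
  show "(\<lambda>t. ln (1 + y * snr * t)) \<in> borel_measurable borel" by measurable
  show "AE t in \<mu>. \<bar>ln (1 + y * snr * t)\<bar> \<le> 2 + \<bar>y\<bar> * A"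
    using X_bounds[OF assms]
  proof eventually_elim
    fix t assume h: "0 \<le> snr * t/(1+y * snr * t) \<and> snr * t/(1+y * snr * t) \<le> 2 * A \<and> 0 < 1/(1+y * snr * t) \<and> 1/(1+y * snr * t) \<le> 2
     \<and> 1/2 \<le> 1 + y * snr * t \<and> 0 \<le> snr * t \<and> snr * t \<le> A \<and> 0 \<le> t \<and> t \<le> B"
    have "\<bar>y * snr * t\<bar> = \<bar>y\<bar> * (snr * t)" using h snr_pos by (simp add: abs_mult)
    also have "\<dots> \<le> \<bar>y\<bar> * A" using h by (intro mult_left_mono) auto
    finally have "\<bar>1 + y * snr * t\<bar> \<le> 1 + \<bar>y\<bar> * A" by linarith
    with ln_bound[of "1 + y * snr * t"] h show "\<bar>ln (1 + y * snr * t)\<bar> \<le> 2 + \<bar>y\<bar> * A" by auto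
  qed
qed

lemma p_eq: assumes "-d0 \<le> y" shows "p y = 1 - y * q y"
proof -
  have "p y = (\<integral>t. 1 - y * (snr * t / (1 + y * snr * t)) \<partial>\<mu>)"
    unfolding p_def
  proof (rule integral_cong_AE)
    show "(\<lambda>t. 1 / (1 + y * snr * t)) \<in> borel_measurable \<mu>" by (rule meas) measurable
    show "(\<lambda>t. 1 - y * (snr * t / (1 + y * snr * t))) \<in> borel_measurable \<mu>" by (rule meas) measurable
    show "AE t in \<mu>. 1 / (1 + y * snr * t) = 1 - y * (snr * t / (1 + y * snr * t))"
      using X_bounds[OF assms] by eventually_elim (auto simp: field_simps)
  qed
  also have "\<dots> = (\<integral>t. 1 \<partial>\<mu>) - (\<integral>t. y * (snr * t / (1 + y * snr * t)) \<partial>\<mu>)"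
    using integrable_mult_right[OF int_X[OF assms], of y] by (subst Bochner_Integration.integral_diff) (auto simp del: times_divide_eq_right)
  also have "(\<integral>t. y * (snr * t / (1 + y * snr * t)) \<partial>\<mu>) = y * q y"
    unfolding q_def by (rule integral_mult_right_zero)
  finally show ?thesis by (simp add: P.prob_space)
qed

lemma q_deriv: assumes "0 \<le> v" shows "(q has_real_derivative - s v) (at v)"
proof -
  have "((\<lambda>y. \<integral>t. snr * t / (1 + y * snr * t) \<partial>\<mu>) has_real_derivative (\<integral>t. - ((snr * t / (1 + v * snr * t))^2) \<partial>\<mu>)) (at v)"
  proof (rule deriv_param[OF prob d0_pos, where K="8 * A^3"])
    have v0: "-d0 \<le> v" using assms d0_pos by simp
    fix y assume y: "\<bar>y - v\<bar> < d0"
    hence y0: "-d0 \<le> y" using assms by linarith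
    show "integrable \<mu> (\<lambda>t. snr * t / (1 + y * snr * t))" by (rule int_X[OF y0])
    show "AE t in \<mu>. \<bar>snr * t / (1 + y * snr * t) - snr * t / (1 + v * snr * t) - (y - v) * - (snr * t / (1 + v * snr * t))\<^sup>2\<bar> \<le> 8 * A ^ 3 * (y - v)\<^sup>2"
      using X_bounds[OF y0] X_bounds[of v, OF v0]
    proof (eventually_elim)
      fix t assume hy: "0 \<le> snr * t/(1+y * snr * t) \<and> snr * t/(1+y * snr * t) \<le> 2 * A \<and> 0 < 1/(1+y * snr * t) \<and> 1/(1+y * snr * t) \<le> 2
     \<and> 1/2 \<le> 1 + y * snr * t \<and> 0 \<le> snr * t \<and> snr * t \<le> A \<and> 0 \<le> t \<and> t \<le> B"
        and hv: "0 \<le> snr * t/(1+v * snr * t) \<and> snr * t/(1+v * snr * t) \<le> 2 * A \<and> 0 < 1/(1+v * snr * t) \<and> 1/(1+v * snr * t) \<le> 2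
     \<and> 1/2 \<le> 1 + v * snr * t \<and> 0 \<le> snr * t \<and> snr * t \<le> A \<and> 0 \<le> t \<and> t \<le> B"
      have e1: "y * snr * t = y * (snr * t)" "v * snr * t = v * (snr * t)" by simp_all
      have "snr * t / (1 + y * snr * t) - snr * t / (1 + v * snr * t) - (y - v) * - (snr * t / (1 + v * snr * t))\<^sup>2
          = (y-v)^2 * (snr * t)^3/((1+v * (snr * t))^2 * (1+y * (snr * t)))"
        unfolding e1 using hy hv by (intro rem_q_eq) (auto simp: e1[symmetric])
      also have "\<bar>\<dots>\<bar> \<le> 8 * A ^ 3 * (y - v)\<^sup>2"
        using hy hv by (intro rem_q_bound) (auto simp: e1[symmetric])
      finally show "\<bar>snr * t / (1 + y * snr * t) - snr * t / (1 + v * snr * t) - (y - v) * - (snr * t / (1 + v * snr * t))\<^sup>2\<bar> \<le> 8 * A ^ 3 * (y - v)\<^sup>2" .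
    qed
  next
    show "integrable \<mu> (\<lambda>t. - (snr * t / (1 + v * snr * t))\<^sup>2)"
      using int_X2[of v] assms d0_pos by simp
  qed
  thus ?thesis unfolding q_def s_def by simp
qed

lemma L_deriv: assumes "0 \<le> v" shows "(L has_real_derivative q v) (at v)"
proof -
  have dd: "0 < d0/2" using d0_pos by simp
  show ?thesis unfolding L_def q_def
  proof (rule deriv_param[OF prob dd, where K="8 * A^2"])
    have v0: "-d0 \<le> v" using assms d0_pos by simp
    fix y assume y: "\<bar>y - v\<bar> < d0/2"
    hence y0: "-d0 \<le> y" using assms d0_pos by linarith
    have small: "\<bar>y - v\<bar> * (2 * A) \<le> 1/2"
    proof -
      have "\<bar>y - v\<bar> * (2 * A) \<le> d0/2 * (2 * A)" using y A_nonneg by (intro mult_right_mono) auto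
      also have "\<dots> \<le> 1/2" using A_nonneg by (simp add: d0_def field_simps)
      finally show ?thesis .
    qed
    show "integrable \<mu> (\<lambda>t. ln (1 + y * snr * t))" by (rule int_L[OF y0])
    show "AE t in \<mu>. \<bar>ln (1 + y * snr * t) - ln (1 + v * snr * t) - (y - v) * (snr * t / (1 + v * snr * t))\<bar> \<le> 8 * A^2 * (y - v)\<^sup>2"
      using X_bounds[OF y0] X_bounds[of v, OF v0]
    proof (eventually_elim)
      fix t assume hy: "0 \<le> snr * t/(1+y * snr * t) \<and> snr * t/(1+y * snr * t) \<le> 2 * A \<and> 0 < 1/(1+y * snr * t) \<and> 1/(1+y * snr * t) \<le> 2
     \<and> 1/2 \<le> 1 + y * snr * t \<and> 0 \<le> snr * t \<and> snr * t \<le> A \<and> 0 \<le> t \<and> t \<le> B"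
        and hv: "0 \<le> snr * t/(1+v * snr * t) \<and> snr * t/(1+v * snr * t) \<le> 2 * A \<and> 0 < 1/(1+v * snr * t) \<and> 1/(1+v * snr * t) \<le> 2
     \<and> 1/2 \<le> 1 + v * snr * t \<and> 0 \<le> snr * t \<and> snr * t \<le> A \<and> 0 \<le> t \<and> t \<le> B"
      have e1: "y * snr * t = y * (snr * t)" "v * snr * t = v * (snr * t)" by simp_all
      show "\<bar>ln (1 + y * snr * t) - ln (1 + v * snr * t) - (y - v) * (snr * t / (1 + v * snr * t))\<bar> \<le> 8 * A^2 * (y - v)\<^sup>2"
        unfolding e1 using hy hv small by (intro rem_L_bound) (auto simp: e1[symmetric])
    qed
  next
    show "integrable \<mu> (\<lambda>t. snr * t / (1 + v * snr * t))" using int_X[of v] assms d0_pos by simp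
  qed
qed


definition "r v = q v / p v"
definition "G v = v * p v"

lemma p_lower: assumes "0 \<le> v" shows "1 / (1 + v * A) \<le> p v"
proof -
  have v0: "-d0 \<le> v" using assms d0_pos by simp
  have "(\<integral>t. 1 / (1 + v * A) \<partial>\<mu>) \<le> p v" unfolding p_def
  proof (rule integral_mono_AE)
    show "integrable \<mu> (\<lambda>t. 1 / (1 + v * snr * t))" by (rule int_w[OF v0])
    show "AE t in \<mu>. 1 / (1 + v * A) \<le> 1 / (1 + v * snr * t)"
      using X_bounds[OF v0]
    proof eventually_elim
      fix t assume h: "0 \<le> snr * t / (1 + v * snr * t) \<and> snr * t / (1 + v * snr * t) \<le> 2 * A \<and> 0 < 1 / (1 + v * snr * t) \<and> 1 / (1 + v * snr * t) \<le> 2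
     \<and> 1/2 \<le> 1 + v * snr * t \<and> 0 \<le> snr * t \<and> snr * t \<le> A \<and> 0 \<le> t \<and> t \<le> B"
      have "v * (snr * t) \<le> v * A" using h assms by (intro mult_left_mono) auto
      hence "1 + v * snr * t \<le> 1 + v * A" by (simp add: mult.assoc)
      thus "1 / (1 + v * A) \<le> 1 / (1 + v * snr * t)" using h by (intro divide_left_mono) auto
    qed
  qed simp
  thus ?thesis by (simp add: P.prob_space)
qed

lemma p_pos: "0 \<le> v \<Longrightarrow> 0 < p v"
  using p_lower[of v] A_nonneg by (smt (verit) divide_pos_pos mult_nonneg_nonneg)

lemma q_nonneg: assumes "0 \<le> v" shows "0 \<le> q v"
proof -
  have v0: "-d0 \<le> v" using assms d0_pos by simp
  show ?thesis unfolding q_def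
    by (rule integral_nonneg_AE) (use X_bounds[OF v0] in \<open>eventually_elim, auto\<close>)
qed

lemma var_eq: assumes "0 \<le> v"
  shows "s v - (q v)^2 = (\<integral>t. (snr * t / (1 + v * snr * t) - q v)^2 \<partial>\<mu>)"
proof -
  have v0: "-d0 \<le> v" using assms d0_pos by simp
  show ?thesis unfolding s_def q_def
    using P.variance_eq[OF int_X[OF v0] int_X2[OF v0]] by simp
qed

lemma var_nonneg: assumes "0 \<le> v" shows "(q v)^2 \<le> s v"
proof -
  have "0 \<le> (\<integral>t. (snr * t / (1 + v * snr * t) - q v)^2 \<partial>\<mu>)" by (rule integral_nonneg_AE) simp
  thus ?thesis using var_eq[OF assms] by linarith
qed

lemma p_deriv: assumes "0 \<le> v" shows "(p has_real_derivative (v * s v - q v)) (at v)"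
proof -
  have "((\<lambda>y. y * q y) has_real_derivative (1 * q v + (- s v) * v)) (at v)"
    by (rule DERIV_mult[OF DERIV_ident q_deriv[OF assms]])
  from DERIV_diff[OF DERIV_const this]
  have "((\<lambda>y. 1 - y * q y) has_real_derivative (0 - (1 * q v + (- s v) * v))) (at v)" .
  hence d: "((\<lambda>y. 1 - y * q y) has_real_derivative (v * s v - q v)) (at v)" by (simp add: mult.commute)
  show ?thesis
  proof (rule has_field_derivative_transform_within_open[OF d, of "{-d0<..}"])
    show "open {-d0<..}" by simp
    show "v \<in> {-d0<..}" using assms d0_pos by simp
    show "\<And>x. x \<in> {-d0<..} \<Longrightarrow> 1 - x * q x = p x" using p_eq by simp
  qed
qed

lemma r_deriv: assumes "0 \<le> v" shows "(r has_real_derivative ((q v)^2 - s v) / (p v)^2) (at v)"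
proof -
  have pp: "p v \<noteq> 0" using p_pos[OF assms] by simp
  have "((\<lambda>y. q y / p y) has_real_derivative ((- s v) * p v - q v * (v * s v - q v)) / (p v * p v)) (at v)"
    by (rule DERIV_divide[OF q_deriv[OF assms] p_deriv[OF assms] pp])
  moreover have "((- s v) * p v - q v * (v * s v - q v)) / (p v * p v) = ((q v)^2 - s v) / (p v)^2"
  proof -
    have pe: "p v = 1 - v * q v" using p_eq assms d0_pos by simp
    have num: "(- s v) * p v - q v * (v * s v - q v) = (q v)^2 - s v"
      unfolding pe by (simp add: power2_eq_square algebra_simps)
    show ?thesis by (simp only: num power2_eq_square)
  qed
  ultimately show ?thesis unfolding r_def[abs_def] by simp
qed

lemma G_deriv: assumes "0 \<le> v" shows "(G has_real_derivative (p v + v * (v * s v - q v))) (at v)"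
  unfolding G_def[abs_def] using p_deriv[OF assms]
  by (auto intro!: derivative_eq_intros)

lemma G_deriv_pos: assumes "0 \<le> v" shows "0 < p v + v * (v * s v - q v)"
proof -
  have pe: "p v = 1 - v * q v" using p_eq assms d0_pos by simp
  have "v * v * (q v)^2 \<le> v * v * s v" using var_nonneg[OF assms] assms by (intro mult_left_mono) auto
  hence "(p v)^2 \<le> p v + v * (v * s v - q v)"
    unfolding pe by (simp add: power2_eq_square algebra_simps)
  moreover have "0 < (p v)^2" using p_pos[OF assms] by simp
  ultimately show ?thesis by linarith
qed

lemma G_strict_mono: assumes "0 \<le> a" "a < b" shows "G a < G b"
proof -
  have "G b > G a"
    using assms by (intro DERIV_pos_imp_increasing[of a b G]) (auto intro!: exI G_deriv G_deriv_pos)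
  thus ?thesis by simp
qed

lemma G_pos: "0 < v \<Longrightarrow> 0 < G v" using p_pos[of v] by (simp add: G_def)

lemma p0: "p 0 = 1" unfolding p_def by (simp add: P.prob_space)
lemma q0: "q 0 = snr" unfolding q_def using normalized by simp
lemma L0: "L 0 = 0" unfolding L_def by simp
lemma r0: "r 0 = snr" unfolding r_def using p0 q0 by simp

lemma r_cont: "0 \<le> v \<Longrightarrow> isCont r v" using r_deriv DERIV_isCont by blast
lemma G_cont: "0 \<le> v \<Longrightarrow> isCont G v" using G_deriv DERIV_isCont by blast



lemma gamma_hat_eq: assumes "0 < v" shows "gamma_hat \<mu> snr v = G v"
proof -
  have v0: "-d0 \<le> v" using assms d0_pos by simp
  have "gamma_hat \<mu> snr v = (\<integral>t. v * (1 / (1 + v * snr * t)) \<partial>\<mu>)"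
    unfolding gamma_hat_def
  proof (rule integral_cong_AE)
    show "(\<lambda>t. 1 / (snr * t + 1 / v)) \<in> borel_measurable \<mu>" by (rule meas) measurable
    show "(\<lambda>t. v * (1 / (1 + v * snr * t))) \<in> borel_measurable \<mu>" by (rule meas) measurable
    show "AE t in \<mu>. 1 / (snr * t + 1 / v) = v * (1 / (1 + v * snr * t))"
      using X_bounds[OF v0]
    proof eventually_elim
      fix t assume h: "0 \<le> snr * t / (1 + v * snr * t) \<and> snr * t / (1 + v * snr * t) \<le> 2 * A \<and> 0 < 1 / (1 + v * snr * t) \<and> 1 / (1 + v * snr * t) \<le> 2
     \<and> 1/2 \<le> 1 + v * snr * t \<and> 0 \<le> snr * t \<and> snr * t \<le> A \<and> 0 \<le> t \<and> t \<le> B"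
      have "snr * t + 1 / v = (1 + v * snr * t) / v" using assms by (simp add: field_simps)
      thus "1 / (snr * t + 1 / v) = v * (1 / (1 + v * snr * t))" using h assms by simp
    qed
  qed
  also have "\<dots> = G v" unfolding G_def p_def by (rule integral_mult_right_zero)
  finally show ?thesis .
qed

lemma gamma_hat_inv_eq: assumes "0 < v" shows "gamma_hat_inv \<mu> snr (G v) = v"
  unfolding gamma_hat_inv_def
proof (rule the_equality)
  show "0 < v \<and> gamma_hat \<mu> snr v = G v" using assms gamma_hat_eq by simp
  fix w assume "0 < w \<and> gamma_hat \<mu> snr w = G v"
  hence w: "0 < w" "G w = G v" using gamma_hat_eq by auto
  show "w = v"
  proof (rule ccontr)
    assume "w \<noteq> v"
    hence "w < v \<or> v < w" by auto
    thus False using G_strict_mono[of w v] G_strict_mono[of v w] w assms by auto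
  qed
qed

lemma r_alt: assumes "0 < v" shows "r v = 1 / G v - 1 / v"
proof -
  have pe: "p v = 1 - v * q v" using p_eq assms d0_pos by simp
  have pp: "p v \<noteq> 0" using p_pos[of v] assms by simp
  show ?thesis unfolding r_def G_def using ra[OF pp assms pe] .
qed

lemma eta_G: assumes "0 < v" shows "eta \<mu> snr (G v) = r v"
  unfolding eta_def using gamma_hat_inv_eq[OF assms] r_alt[OF assms] by simp

lemma eta_dom_eq: "eta_dom \<mu> snr = G ` {0<..}"
  unfolding eta_dom_def using gamma_hat_eq G_pos by auto

lemma rho_s_eq: "1 / gamma_hat \<mu> snr 1 - 1 = r 1"
proof -
  have pe: "p 1 = 1 - q 1" using p_eq[of 1] d0_pos by simp
  have pp: "p 1 \<noteq> 0" using p_pos[of 1] by simp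
  show ?thesis using gamma_hat_eq[of 1] rs[OF pp pe] unfolding G_def r_def by simp
qed

lemma C_eq: "C_gau_luis \<mu> snr = L 1" unfolding C_gau_luis_def L_def by simp

lemma var_pos: assumes nd: "\<not> (AE t in \<mu>. t = 1)" and v: "0 \<le> v" shows "(q v)^2 < s v"
proof (rule ccontr)
  assume "\<not> (q v)^2 < s v"
  hence "s v - (q v)^2 = 0" using var_nonneg[OF v] by simp
  hence z: "(\<integral>t. (snr * t / (1 + v * snr * t) - q v)^2 \<partial>\<mu>) = 0" using var_eq[OF v] by simp
  have v0: "-d0 \<le> v" using v d0_pos by simp
  have intd: "integrable \<mu> (\<lambda>t. (snr * t / (1 + v * snr * t) - q v)^2)"
  proof (rule intb[where C="(2 * A + \<bar>q v\<bar>)^2"])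
    show "(\<lambda>t. (snr * t / (1 + v * snr * t) - q v)^2) \<in> borel_measurable borel" by measurable
    show "AE t in \<mu>. \<bar>(snr * t / (1 + v * snr * t) - q v)^2\<bar> \<le> (2 * A + \<bar>q v\<bar>)^2"
      using X_bounds[OF v0]
    proof eventually_elim
      fix t assume h: "0 \<le> snr * t / (1 + v * snr * t) \<and> snr * t / (1 + v * snr * t) \<le> 2 * A \<and> 0 < 1 / (1 + v * snr * t) \<and> 1 / (1 + v * snr * t) \<le> 2
     \<and> 1/2 \<le> 1 + v * snr * t \<and> 0 \<le> snr * t \<and> snr * t \<le> A \<and> 0 \<le> t \<and> t \<le> B"
      have "\<bar>snr * t / (1 + v * snr * t) - q v\<bar> \<le> 2 * A + \<bar>q v\<bar>" using h by linarith
      hence "\<bar>snr * t / (1 + v * snr * t) - q v\<bar>^2 \<le> (2 * A + \<bar>q v\<bar>)^2" by (rule power_mono) simp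
      thus "\<bar>(snr * t / (1 + v * snr * t) - q v)^2\<bar> \<le> (2 * A + \<bar>q v\<bar>)^2" by simp
    qed
  qed
  have "AE t in \<mu>. (snr * t / (1 + v * snr * t) - q v)^2 = 0"
    using z integral_nonneg_eq_0_iff_AE[OF intd] by simp
  hence ae: "AE t in \<mu>. t = q v / (snr * p v)"
    using X_bounds[OF v0]
  proof eventually_elim
    fix t assume e: "(snr * t / (1 + v * snr * t) - q v)^2 = 0"
      and h: "0 \<le> snr * t / (1 + v * snr * t) \<and> snr * t / (1 + v * snr * t) \<le> 2 * A \<and> 0 < 1 / (1 + v * snr * t) \<and> 1 / (1 + v * snr * t) \<le> 2
     \<and> 1/2 \<le> 1 + v * snr * t \<and> 0 \<le> snr * t \<and> snr * t \<le> A \<and> 0 \<le> t \<and> t \<le> B"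
    have "snr * t / (1 + v * snr * t) = q v" using e by simp
    hence "snr * t = q v * (1 + v * snr * t)" using h by (simp add: field_simps)
    hence e1: "snr * t = q v + q v * (v * snr * t)" by (simp add: distrib_left)
    have "snr * t * (1 - v * q v) = snr * t - q v * (v * snr * t)" by (simp add: algebra_simps)
    hence "snr * t * (1 - v * q v) = q v" using e1 by linarith
    hence "snr * t * p v = q v" using p_eq v0 by simp
    thus "t = q v / (snr * p v)" using p_pos[OF v] snr_pos by (simp add: field_simps)
  qed
  have "(\<integral>t. t \<partial>\<mu>) = (\<integral>t. q v / (snr * p v) \<partial>\<mu>)"
    using ae by (intro integral_cong_AE meas) auto
  hence "(\<integral>t. t \<partial>\<mu>) = q v / (snr * p v)" by (simp add: P.prob_space)
  hence "q v / (snr * p v) = 1" using normalized by linarith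
  hence "AE t in \<mu>. t = 1" using ae by (simp only:)
  thus False using nd by simp
qed

lemma r_strict: assumes nd: "\<not> (AE t in \<mu>. t = 1)" and "0 \<le> a" "a < b" shows "r b < r a"
proof (rule DERIV_neg_imp_decreasing[OF assms(3)])
  fix x assume "a \<le> x" "x \<le> b"
  hence x: "0 \<le> x" using assms by simp
  have "((q x)^2 - s x) / (p x)^2 < 0"
    using var_pos[OF nd x] p_pos[OF x] by (simp add: divide_neg_pos)
  thus "\<exists>y. (r has_real_derivative y) (at x) \<and> y < 0" using r_deriv[OF x] by blast
qed

lemma r_inj: assumes nd: "\<not> (AE t in \<mu>. t = 1)" and "0 \<le> a" "0 \<le> b" "r a = r b" shows "a = b"
  using r_strict[OF nd, of a b] r_strict[OF nd, of b a] assms by (cases a b rule: linorder_cases) auto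

lemma eta_inv_eq: assumes nd: "\<not> (AE t in \<mu>. t = 1)" and v: "0 < v" shows "eta_inv \<mu> snr (r v) = G v"
  unfolding eta_inv_def
proof (rule the_equality)
  show "G v \<in> eta_dom \<mu> snr \<and> eta \<mu> snr (G v) = r v" using eta_dom_eq eta_G v by auto
  fix u assume "u \<in> eta_dom \<mu> snr \<and> eta \<mu> snr u = r v"
  then obtain w where w: "0 < w" "u = G w" "r w = r v" using eta_dom_eq eta_G by auto
  hence "w = v" using r_inj[OF nd, of w v] v by simp
  thus "u = G v" using w by simp
qed

end




context LUIS begin

interpretation P: prob_space \<mu> by (rule prob)

lemma main_nd: assumes nd: "\<not> (AE t in \<mu>. t = 1)"
  shows "(eta_inv \<mu> snr has_integral (L 1 + ln (p 1))) {r 1..snr}"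
proof -
  define rinv where "rinv = inv_into {0..1} r"
  define F where "F \<rho> = G (rinv \<rho>)" for \<rho>
  have rcont: "continuous_on {0..1} r" by (intro continuous_at_imp_continuous_on ballI r_cont) auto
  have Gcont: "continuous_on {0..1} G" by (intro continuous_at_imp_continuous_on ballI G_cont) auto
  have rinj: "inj_on r {0..1}" by (rule inj_onI) (use r_inj[OF nd] in auto)
  have rinv_r: "\<And>v. v \<in> {0..1} \<Longrightarrow> rinv (r v) = v" unfolding rinv_def using rinj by simp
  have img: "r ` {0..1} = {r 1..r 0}"
  proof
    show "r ` {0..1} \<subseteq> {r 1..r 0}"
    proof
      fix y assume "y \<in> r ` {0..1}"
      then obtain v where v: "v \<in> {0..1}" "y = r v" by auto
      have "r 1 \<le> r v" using r_strict[OF nd, of v 1] v by (cases "v = 1") auto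
      moreover have "r v \<le> r 0" using r_strict[OF nd, of 0 v] v by (cases "v = 0") auto
      ultimately show "y \<in> {r 1..r 0}" using v by simp
    qed
    show "{r 1..r 0} \<subseteq> r ` {0..1}"
    proof
      fix y assume "y \<in> {r 1..r 0}"
      then obtain x where "0 \<le> x" "x \<le> 1" "r x = y" using IVT2'[of r 1 y 0, OF _ _ _ rcont] by auto
      thus "y \<in> r ` {0..1}" by auto
    qed
  qed
  have rinv_cont: "continuous_on {r 1..r 0} rinv"
    using continuous_on_inv[OF rcont compact_Icc, of rinv] rinv_r img by simp
  have rinv_into: "rinv ` {r 1..r 0} \<subseteq> {0..1}"
    unfolding rinv_def using img[symmetric] by (auto intro: inv_into_into)
  have Fcont: "continuous_on {r 1..r 0} F"
    unfolding F_def by (rule continuous_on_compose2[OF Gcont rinv_cont rinv_into])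
  have Fr: "\<And>v. v \<in> {0..1} \<Longrightarrow> F (r v) = G v" unfolding F_def using rinv_r by simp
  define \<Psi> where "\<Psi> v = integral {r 1..r v} F + L v + ln (p v)" for v
  have dPsi: "(\<Psi> has_field_derivative 0) (at v within {0..1})" if v: "v \<in> {0..1}" for v
  proof -
    have v0: "0 \<le> v" using v by simp
    have rv: "r v \<in> {r 1..r 0}" using img v by auto
    have d1: "((\<lambda>x. integral {r 1..x} F) has_real_derivative F (r v)) (at (r v) within r ` {0..1})"
      unfolding img by (rule integral_has_real_derivative[OF Fcont rv])
    have d2: "(r has_real_derivative ((q v)^2 - s v) / (p v)^2) (at v within {0..1})"
      by (rule has_field_derivative_at_within[OF r_deriv[OF v0]])
    have dA: "((\<lambda>v. integral {r 1..r v} F) has_real_derivative F (r v) * (((q v)^2 - s v) / (p v)^2)) (at v within {0..1})"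
      using DERIV_image_chain[OF d1 d2] by (simp add: o_def)
    have dB: "(L has_real_derivative q v) (at v within {0..1})"
      by (rule has_field_derivative_at_within[OF L_deriv[OF v0]])
    have dC: "((\<lambda>v. ln (p v)) has_real_derivative (1 / p v) * (v * s v - q v)) (at v within {0..1})"
      by (rule DERIV_chain2[OF DERIV_ln_divide[OF p_pos[OF v0]] has_field_derivative_at_within[OF p_deriv[OF v0]]])
    have sum: "(\<Psi> has_real_derivative F (r v) * (((q v)^2 - s v) / (p v)^2) + q v + (1 / p v) * (v * s v - q v)) (at v within {0..1})"
      unfolding \<Psi>_def[abs_def] by (intro DERIV_add dA dB dC)
    have pe: "p v = 1 - v * q v" using p_eq v0 d0_pos by simp
    have pp: "p v \<noteq> 0" using p_pos[OF v0] by simp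
    have "F (r v) * (((q v)^2 - s v) / (p v)^2) + q v + (1 / p v) * (v * s v - q v)
        = (v * ((q v)^2 - s v) + q v * p v + (v * s v - q v)) / p v"
      using pp unfolding Fr[OF v] G_def by (simp add: field_simps power2_eq_square)
    also have "v * ((q v)^2 - s v) + q v * p v + (v * s v - q v) = 0"
      unfolding pe by (simp add: power2_eq_square algebra_simps)
    finally show ?thesis using sum by simp
  qed
  obtain c where c: "\<And>x. x \<in> {0..1} \<Longrightarrow> \<Psi> x = c"
    using has_field_derivative_zero_constant[OF convex_real_interval(5) dPsi] by (metis atLeastAtMost_iff)
  have "\<Psi> 0 = \<Psi> 1" using c[of 0] c[of 1] by simp
  hence eqF: "integral {r 1..snr} F = L 1 + ln (p 1)"
    unfolding \<Psi>_def using r0 L0 p0 by simp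
  have "F integrable_on {r 1..snr}" using Fcont r0 by (simp add: integrable_continuous_interval)
  hence hF: "(F has_integral (L 1 + ln (p 1))) {r 1..snr}" using eqF by (simp add: has_integral_integral)
  have "(F has_integral (L 1 + ln (p 1))) {r 1..snr} \<longleftrightarrow> (eta_inv \<mu> snr has_integral (L 1 + ln (p 1))) {r 1..snr}"
  proof (rule has_integral_spike_finite_eq[of "{snr}"])
    show "finite {snr}" by simp
    fix \<rho> assume "\<rho> \<in> {r 1..snr} - {snr}"
    hence "\<rho> \<in> r ` {0..1}" "\<rho> \<noteq> snr" using img r0 by auto
    then obtain v where v: "v \<in> {0..1}" "\<rho> = r v" by auto
    have "v \<noteq> 0" using v \<open>\<rho> \<noteq> snr\<close> r0 by auto
    hence "0 < v" using v by simp
    thus "eta_inv \<mu> snr \<rho> = F \<rho>" using eta_inv_eq[OF nd] Fr v by simp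
  qed
  with hF show ?thesis by simp
qed


lemma dg_p: assumes dg: "AE t in \<mu>. t = 1" and v: "0 \<le> v" shows "p v = 1 / (1 + v * snr)"
proof -
  have "p v = (\<integral>t. 1 / (1 + v * snr) \<partial>\<mu>)" unfolding p_def
    using dg by (intro integral_cong_AE meas) (auto elim: AE_mp)
  thus ?thesis by (simp add: P.prob_space)
qed

lemma dg_q: assumes dg: "AE t in \<mu>. t = 1" and v: "0 \<le> v" shows "q v = snr / (1 + v * snr)"
proof -
  have "q v = (\<integral>t. snr / (1 + v * snr) \<partial>\<mu>)" unfolding q_def
    using dg by (intro integral_cong_AE meas) (auto elim: AE_mp)
  thus ?thesis by (simp add: P.prob_space)
qed

lemma dg_L: assumes dg: "AE t in \<mu>. t = 1" shows "L 1 = ln (1 + snr)"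
proof -
  have "L 1 = (\<integral>t. ln (1 + snr) \<partial>\<mu>)" unfolding L_def
    using dg by (intro integral_cong_AE meas) (auto elim: AE_mp)
  thus ?thesis by (simp add: P.prob_space)
qed

lemma dg_r: assumes dg: "AE t in \<mu>. t = 1" and v: "0 \<le> v" shows "r v = snr"
proof -
  have "0 < 1 + v * snr" using v snr_pos by (simp add: add_pos_nonneg)
  thus ?thesis unfolding r_def using dg_p[OF dg v] dg_q[OF dg v] by simp
qed

lemma r_nonneg: "0 \<le> v \<Longrightarrow> 0 \<le> r v"
  unfolding r_def by (intro divide_nonneg_nonneg q_nonneg less_imp_le[OF p_pos])

lemma phi_int: assumes "0 \<le> b" shows "(phi_gau has_integral ln (1 + b)) {0..b}"
proof -
  have "(phi_gau has_integral (ln (1 + b) - ln (1 + 0))) {0..b}"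
  proof (rule fundamental_theorem_of_calculus[OF assms])
    fix x :: real assume "x \<in> {0..b}"
    hence "0 < 1 + x" by simp
    hence "((\<lambda>x. ln (1 + x)) has_real_derivative (1 / (1 + x))) (at x within {0..b})"
      by (auto intro!: derivative_eq_intros)
    thus "((\<lambda>x. ln (1 + x)) has_vector_derivative phi_gau x) (at x within {0..b})"
      by (simp add: has_real_derivative_iff_has_vector_derivative phi_gau_def)
  qed
  thus ?thesis by simp
qed

lemma one_plus_r1: "1 + r 1 = 1 / p 1"
  using rho_s_eq gamma_hat_eq[of 1] by (simp add: G_def)

lemma eta_part: "(eta_inv \<mu> snr has_integral (L 1 + ln (p 1))) {r 1..snr}"
proof (cases "AE t in \<mu>. t = 1")
  case True
  have "L 1 + ln (p 1) = 0"
    using dg_L[OF True] dg_p[OF True, of 1] snr_pos by (simp add: ln_div)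
  thus ?thesis using dg_r[OF True, of 1] has_integral_refl(2)[of "eta_inv \<mu> snr" snr] by simp
next
  case False
  thus ?thesis by (rule main_nd)
qed

lemma part1: "integral {0..r 1} phi_gau + integral {r 1..snr} (eta_inv \<mu> snr) = L 1"
proof -
  have "integral {0..r 1} phi_gau = ln (1 + r 1)" using phi_int[OF r_nonneg[of 1]] by (simp add: integral_unique)
  also have "\<dots> = - ln (p 1)" using one_plus_r1 p_pos[of 1] by (simp add: ln_div)
  finally show ?thesis using integral_unique[OF eta_part] by simp
qed


lemma G_r_prod: assumes "0 < v" shows "G v * (1 + r v) = 1 + (v - 1) * p v"
proof -
  have "G v \<noteq> 0" using G_pos[OF assms] by simp
  hence "G v * (1 + r v) = G v + 1 - G v / v" unfolding r_alt[OF assms] by (simp add: field_simps)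
  also have "G v / v = p v" using assms by (simp add: G_def)
  finally show ?thesis by (simp add: G_def algebra_simps)
qed

lemma r1_le: "r 1 \<le> snr"
proof (cases "AE t in \<mu>. t = 1")
  case True thus ?thesis using dg_r[OF True, of 1] by simp
next
  case False thus ?thesis using r_strict[OF False, of 0 1] r0 by simp
qed

lemma ex_eta: "(\<exists>u\<in>eta_dom \<mu> snr. eta \<mu> snr u = \<rho>) \<longleftrightarrow> (\<exists>w>0. r w = \<rho>)"
  unfolding eta_dom_eq using eta_G by auto

lemma mc: assumes rho: "0 \<le> \<rho>" "\<rho> < snr"
  shows "min_curve \<mu> snr \<rho> = (if \<rho> \<le> r 1 then phi_gau \<rho> else eta_inv \<mu> snr \<rho>)"
proof (cases "AE t in \<mu>. t = 1")
  case True
  have "\<not> (\<exists>w>0. r w = \<rho>)" using dg_r[OF True] rho by auto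
  hence "\<not> (\<exists>u\<in>eta_dom \<mu> snr. eta \<mu> snr u = \<rho>)" using ex_eta by simp
  moreover have "\<rho> \<le> r 1" using dg_r[OF True, of 1] rho by simp
  ultimately show ?thesis unfolding min_curve_def by simp
next
  case nd: False
  show ?thesis
  proof (cases "\<rho> \<le> r 1")
    case le: True
    show ?thesis
    proof (cases "\<exists>w>0. r w = \<rho>")
      case True
      then obtain w where w: "0 < w" "r w = \<rho>" by auto
      have "1 \<le> w"
      proof (rule ccontr)
        assume "\<not> 1 \<le> w"
        hence "r 1 < r w" using r_strict[OF nd, of w 1] w by simp
        thus False using w le by simp
      qed
      have "1 \<le> G w * (1 + \<rho>)" unfolding G_r_prod[OF w(1), unfolded w(2)]
        using \<open>1 \<le> w\<close> p_pos[of w] w by simp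
      hence "phi_gau \<rho> \<le> G w" using rho by (simp add: phi_gau_def field_simps)
      moreover have "eta_inv \<mu> snr \<rho> = G w" using eta_inv_eq[OF nd w(1)] w by simp
      ultimately show ?thesis using le True ex_eta unfolding min_curve_def by simp
    next
      case False
      hence "\<not> (\<exists>u\<in>eta_dom \<mu> snr. eta \<mu> snr u = \<rho>)" using ex_eta by blast
      thus ?thesis using le unfolding min_curve_def by simp
    qed
  next
    case gt: False
    have rcont: "continuous_on {0..1} r" by (intro continuous_at_imp_continuous_on ballI r_cont) auto
    obtain w where w: "0 \<le> w" "w \<le> 1" "r w = \<rho>"
      using IVT2'[of r 1 \<rho> 0, OF _ _ _ rcont] gt rho r0 by auto
    have "w \<noteq> 0" using w r0 rho by auto
    have "w \<noteq> 1" using w gt by auto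
    have w0: "0 < w" "w < 1" using w \<open>w \<noteq> 0\<close> \<open>w \<noteq> 1\<close> by auto
    have "(w - 1) * p w < 0" using w0 p_pos[of w] by (simp add: mult_neg_pos)
    hence "G w * (1 + \<rho>) < 1" using G_r_prod[OF w0(1)] w by simp
    hence "G w < phi_gau \<rho>" using rho by (simp add: phi_gau_def field_simps)
    moreover have "eta_inv \<mu> snr \<rho> = G w" using eta_inv_eq[OF nd w0(1)] w by simp
    moreover have "\<exists>w>0. r w = \<rho>" using w0 w by auto
    ultimately show ?thesis using gt ex_eta unfolding min_curve_def by simp
  qed
qed

lemma mc_le: "min_curve \<mu> snr \<rho> \<le> phi_gau \<rho>"
  unfolding min_curve_def by simp

lemma target_int: "((\<lambda>\<rho>. if \<rho> \<le> r 1 then phi_gau \<rho> else eta_inv \<mu> snr \<rho>) has_integral L 1) {0..snr}"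
proof -
  let ?T = "\<lambda>\<rho>. if \<rho> \<le> r 1 then phi_gau \<rho> else eta_inv \<mu> snr \<rho>"
  have a: "(?T has_integral ln (1 + r 1)) {0..r 1}"
    using phi_int[OF r_nonneg[of 1]] by (subst has_integral_cong) auto
  have b: "(?T has_integral (L 1 + ln (p 1))) {r 1..snr}"
    using eta_part by (subst has_integral_spike_finite_eq[of "{r 1}"]) auto
  have "(?T has_integral (ln (1 + r 1) + (L 1 + ln (p 1)))) {0..snr}"
    by (rule has_integral_combine[OF r_nonneg[of 1] r1_le a b]) simp
  moreover have "ln (1 + r 1) = - ln (p 1)" using one_plus_r1 p_pos[of 1] by (simp add: ln_div)
  ultimately show ?thesis by simp
qed


lemma part2:
  fixes f :: "nat \<Rightarrow> real \<Rightarrow> real"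
  assumes hk: "\<forall>k. f k integrable_on {0..}
               \<and> (\<forall>\<rho>\<in>{0..<snr}. 0 \<le> f k \<rho> \<and> f k \<rho> < min_curve \<mu> snr \<rho>)
               \<and> (\<forall>\<rho>\<ge>snr. f k \<rho> = 0)"
    and conv: "\<forall>\<rho>\<in>{0..<snr}. (\<lambda>k. f k \<rho>) \<longlonglongrightarrow> min_curve \<mu> snr \<rho>"
  shows "(\<lambda>k. integral {0..} (f k)) \<longlonglongrightarrow> L 1"
proof -
  define g where "g \<rho> = (if \<rho> < snr then min_curve \<mu> snr \<rho> else 0)" for \<rho>
  define h where "h \<rho> = (if \<rho> \<in> {0..snr} then (1::real) else 0)" for \<rho>
  have "((\<lambda>x. 1::real) has_integral snr) {0..snr}"
    using has_integral_const_real[of "1::real" 0 snr] snr_pos by simp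
  hence "(h has_integral snr) {0..snr}" by (subst has_integral_cong[of _ h]) (auto simp: h_def)
  hence "(h has_integral snr) {0..}" by (rule has_integral_on_superset) (auto simp: h_def)
  hence hint: "h integrable_on {0..}" by blast
  have le: "norm (f k x) \<le> h x" if x: "x \<in> {0..}" for k x
  proof (cases "x < snr")
    case True
    hence "0 \<le> f k x" "f k x < min_curve \<mu> snr x" using hk x by auto
    moreover have "min_curve \<mu> snr x \<le> 1"
    proof -
      have "1 / (1 + x) \<le> 1" using x by (simp add: divide_le_eq)
      thus ?thesis using mc_le[of x] by (simp add: phi_gau_def)
    qed
    ultimately show ?thesis using True x by (simp add: h_def)
  next
    case False
    hence "f k x = 0" using hk by auto
    thus ?thesis by (simp add: h_def)
  qed
  have cv: "(\<lambda>k. f k x) \<longlonglongrightarrow> g x" if x: "x \<in> {0..}" for x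
  proof (cases "x < snr")
    case True thus ?thesis using conv x by (simp add: g_def)
  next
    case False
    hence "\<And>k. f k x = 0" using hk by auto
    thus ?thesis using False by (simp add: g_def)
  qed
  have lim: "(\<lambda>k. integral {0..} (f k)) \<longlonglongrightarrow> integral {0..} g"
  proof (rule dominated_convergence(2)[of f "{0..}" h g])
    show "\<And>k. f k integrable_on {0..}" using hk by blast
    show "h integrable_on {0..}" by (rule hint)
    show "\<And>k x. x \<in> {0..} \<Longrightarrow> norm (f k x) \<le> h x" by (rule le)
    show "\<And>x. x \<in> {0..} \<Longrightarrow> (\<lambda>k. f k x) \<longlonglongrightarrow> g x" by (rule cv)
  qed
  have "((\<lambda>\<rho>. if \<rho> \<le> r 1 then phi_gau \<rho> else eta_inv \<mu> snr \<rho>) has_integral L 1) {0..snr}"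
    by (rule target_int)
  hence g1: "(g has_integral L 1) {0..snr}"
    by (subst has_integral_spike_finite_eq[of "{snr}"]) (auto simp: g_def mc)
  define g' where "g' x = (if x \<in> {0..snr} then g x else 0)" for x
  have "(g' has_integral L 1) {0..snr}" using g1 by (subst has_integral_cong[of _ g']) (auto simp: g'_def)
  hence "(g' has_integral L 1) {0..}" by (rule has_integral_on_superset) (auto simp: g'_def)
  hence "(g has_integral L 1) {0..}" by (subst has_integral_cong[of _ g]) (auto simp: g'_def g_def)
  hence "integral {0..} g = L 1" by (rule integral_unique)
  thus ?thesis using lim by simp
qed

end

theorem theorem3:
  fixes \<mu> :: "real measure" and snr B :: real
    and f :: "nat \<Rightarrow> real \<Rightarrow> real"
  assumes prob: "prob_space \<mu>"
    and sets_mu: "sets \<mu> = sets borel"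
    and compact_supp: "AE t in \<mu>. 0 \<le> t \<and> t \<le> B"
    and normalized: "(\<integral>t. t \<partial>\<mu>) = 1"
    and snr_pos: "0 < snr"
  defines "\<rho>s \<equiv> 1 / gamma_hat \<mu> snr 1 - 1"
  shows "integral {0..\<rho>s} phi_gau + integral {\<rho>s..snr} (eta_inv \<mu> snr) = C_gau_luis \<mu> snr
         \<and> ((\<forall>k. f k integrable_on {0..}
               \<and> (\<forall>\<rho>\<in>{0..<snr}. 0 \<le> f k \<rho> \<and> f k \<rho> < min_curve \<mu> snr \<rho>)
               \<and> (\<forall>\<rho>\<ge>snr. f k \<rho> = 0))
            \<and> (\<forall>\<rho>\<in>{0..<snr}. (\<lambda>k. f k \<rho>) \<longlonglongrightarrow> min_curve \<mu> snr \<rho>)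
            \<longrightarrow> (\<lambda>k. integral {0..} (f k)) \<longlonglongrightarrow> C_gau_luis \<mu> snr)"
proof -
  interpret LUIS \<mu> snr B by (rule LUIS.intro[OF prob sets_mu compact_supp normalized snr_pos])
  have rs: "\<rho>s = r 1" unfolding \<rho>s_def by (rule rho_s_eq)
  have p2: "((\<forall>k. f k integrable_on {0..}
               \<and> (\<forall>\<rho>\<in>{0..<snr}. 0 \<le> f k \<rho> \<and> f k \<rho> < min_curve \<mu> snr \<rho>)
               \<and> (\<forall>\<rho>\<ge>snr. f k \<rho> = 0))
            \<and> (\<forall>\<rho>\<in>{0..<snr}. (\<lambda>k. f k \<rho>) \<longlonglongrightarrow> min_curve \<mu> snr \<rho>)
            \<longrightarrow> (\<lambda>k. integral {0..} (f k)) \<longlonglongrightarrow> L 1)"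
  proof
    assume H: "(\<forall>k. f k integrable_on {0..}
               \<and> (\<forall>\<rho>\<in>{0..<snr}. 0 \<le> f k \<rho> \<and> f k \<rho> < min_curve \<mu> snr \<rho>)
               \<and> (\<forall>\<rho>\<ge>snr. f k \<rho> = 0))
            \<and> (\<forall>\<rho>\<in>{0..<snr}. (\<lambda>k. f k \<rho>) \<longlonglongrightarrow> min_curve \<mu> snr \<rho>)"
    show "(\<lambda>k. integral {0..} (f k)) \<longlonglongrightarrow> L 1"
      by (rule part2) (use H in \<open>blast+\<close>)
  qed
  show ?thesis unfolding rs C_eq using part1 p2 by (rule conjI)
qed


end
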